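(* Let $n,m\ge 2$ be integers and $P_n,P_m$ paths on $n$ and $m$ vertices. Then $AT(P_n+_Q P_m)=2$ if $n=m=2$, and $AT(P_n+_Q P_m)=3$ otherwise.
   Context: For an orientation $D$, a subdigraph is Eulerian if every vertex has equal in- and outdegree in it; $D$ is an AT-orientation if the numbers of Eulerian subgraphs with an even and with an odd number of arcs differ; $AT(G)$ is the smallest $k$ such that $G$ has an AT-orientation of maximum outdegree at most $k-1$. $Q(G)$ has vertex set $V(G)\cup E(G)$: it is $S(G)$ (each edge $e=xy$ replaced by the path $x\,e\,y$) plus edges $ee'$ whenever edges $e,e'$ are adjacent in $G$. $G+_Q H$ has vertex set $(V(G)\cup E(G))\times V(H)$, with $(u_1,u_2)\sim(v_1,v_2)$ iff [$u_1=v_1\in V(G)$ and $u_2v_2\in E(H)$] or [$u_2=v_2$ and $u_1v_1\in E(Q(G))$]. *)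

theory Defs
  imports Main
begin

text \<open>A finite simple graph: vertex set and set of edges, each edge a 2-element vertex set.\<close>
type_synonym 'a graph = "'a set \<times> 'a set set"

definition verts :: "'a graph \<Rightarrow> 'a set" where "verts G = fst G"
definition edges :: "'a graph \<Rightarrow> 'a set set" where "edges G = snd G"

definition path_graph :: "nat \<Rightarrow> nat graph" where
  "path_graph n = ({0..<n}, {{i, Suc i} | i. Suc i < n})"

text \<open>Q(G): vertices V(G) (as Inl) and E(G) (as Inr); subdivision edges x--e for x in e,
  plus edges e--e' for distinct adjacent edges e, e'.\<close>
definition Q_graph :: "'a graph \<Rightarrow> ('a + 'a set) graph" where
  "Q_graph G = (Inl ` verts G \<union> Inr ` edges G,
     {{Inl x, Inr e} | x e. e \<in> edges G \<and> x \<in> e}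
     \<union> {{Inr e, Inr e'} | e e'. e \<in> edges G \<and> e' \<in> edges G \<and> e \<noteq> e' \<and> e \<inter> e' \<noteq> {}})"

definition Q_sum :: "'a graph \<Rightarrow> 'b graph \<Rightarrow> (('a + 'a set) \<times> 'b) graph" where
  "Q_sum G H = (verts (Q_graph G) \<times> verts H,
     {{(Inl x, a), (Inl x, b)} | x a b. x \<in> verts G \<and> {a, b} \<in> edges H}
     \<union> {{(u, a), (v, a)} | u v a. a \<in> verts H \<and> {u, v} \<in> edges (Q_graph G)})"

definition is_orientation :: "'a graph \<Rightarrow> ('a \<times> 'a) set \<Rightarrow> bool" where
  "is_orientation G D \<longleftrightarrow>
     (\<forall>(x, y) \<in> D. x \<noteq> y \<and> {x, y} \<in> edges G) \<and>
     (\<forall>e \<in> edges G. \<exists>!a. a \<in> D \<and> {fst a, snd a} = e)"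

definition outdeg :: "('a \<times> 'a) set \<Rightarrow> 'a \<Rightarrow> nat" where
  "outdeg A v = card {a \<in> A. fst a = v}"

definition indeg :: "('a \<times> 'a) set \<Rightarrow> 'a \<Rightarrow> nat" where
  "indeg A v = card {a \<in> A. snd a = v}"

definition eulerian :: "'a set \<Rightarrow> ('a \<times> 'a) set \<Rightarrow> bool" where
  "eulerian V A \<longleftrightarrow> (\<forall>v \<in> V. indeg A v = outdeg A v)"

definition even_eulerian :: "'a graph \<Rightarrow> ('a \<times> 'a) set \<Rightarrow> nat" where
  "even_eulerian G D = card {A. A \<subseteq> D \<and> eulerian (verts G) A \<and> even (card A)}"

definition odd_eulerian :: "'a graph \<Rightarrow> ('a \<times> 'a) set \<Rightarrow> nat" where
  "odd_eulerian G D = card {A. A \<subseteq> D \<and> eulerian (verts G) A \<and> odd (card A)}"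

definition AT_orientation :: "'a graph \<Rightarrow> ('a \<times> 'a) set \<Rightarrow> bool" where
  "AT_orientation G D \<longleftrightarrow> is_orientation G D \<and> even_eulerian G D \<noteq> odd_eulerian G D"

definition AT :: "'a graph \<Rightarrow> nat" where
  "AT G = (LEAST k. \<exists>D. AT_orientation G D \<and> (\<forall>v \<in> verts G. outdeg D v + 1 \<le> k))"

end

theory Submission
  imports Defs
begin


lemma vp[simp]: "verts (path_graph n) = {0..<n}" by (simp add: verts_def path_graph_def)
lemma ep[simp]: "edges (path_graph n) = {{i, Suc i} | i. Suc i < n}" by (simp add: edges_def path_graph_def)
lemma vQ[simp]: "verts (Q_graph G) = Inl ` verts G \<union> Inr ` edges G" by (simp add: verts_def Q_graph_def)
lemma eQ[simp]: "edges (Q_graph G) = {{Inl x, Inr e} | x e. e \<in> edges G \<and> x \<in> e}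
     \<union> {{Inr e, Inr e'} | e e'. e \<in> edges G \<and> e' \<in> edges G \<and> e \<noteq> e' \<and> e \<inter> e' \<noteq> {}}" by (simp add: edges_def Q_graph_def)
lemma vS[simp]: "verts (Q_sum G H) = verts (Q_graph G) \<times> verts H" by (simp add: verts_def Q_sum_def)
lemma eS: "edges (Q_sum G H) = {{(Inl x, a), (Inl x, b)} | x a b. x \<in> verts G \<and> {a, b} \<in> edges H}
     \<union> {{(u, a), (v, a)} | u v a. a \<in> verts H \<and> {u, v} \<in> edges (Q_graph G)}" by (simp add: edges_def Q_sum_def)

definition adj :: "nat \<Rightarrow> nat \<Rightarrow> (nat + nat set) \<times> nat \<Rightarrow> (nat + nat set) \<times> nat \<Rightarrow> bool" where
  "adj n m p q \<longleftrightarrow>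
    (\<exists>i a. i < n \<and> Suc a < m \<and> p = (Inl i, a) \<and> q = (Inl i, Suc a)) \<or>
    (\<exists>i a. Suc i < n \<and> a < m \<and> p = (Inl i, a) \<and> q = (Inr {i, Suc i}, a)) \<or>
    (\<exists>i a. Suc i < n \<and> a < m \<and> p = (Inr {i, Suc i}, a) \<and> q = (Inl (Suc i), a)) \<or>
    (\<exists>i a. Suc (Suc i) < n \<and> a < m \<and> p = (Inr {i, Suc i}, a) \<and> q = (Inr {Suc i, Suc (Suc i)}, a))"

lemma adj_edge: "adj n m p q \<Longrightarrow> {p, q} \<in> edges (Q_sum (path_graph n) (path_graph m))"
  unfolding adj_def eS
  apply (elim disjE exE conjE)
  subgoal for i a apply (rule UnI1) apply simp apply (rule exI[of _ i], rule exI[of _ a], rule exI[of _ "Suc a"]) by auto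
  subgoal for i a apply (rule UnI2) apply simp apply (rule exI[of _ "Inl i"], rule exI[of _ "Inr {i, Suc i}"], rule exI[of _ a]) by auto
  subgoal for i a apply (rule UnI2) apply simp apply (rule exI[of _ "Inr {i, Suc i}"], rule exI[of _ "Inl (Suc i)"], rule exI[of _ a]) by auto
  subgoal for i a
  proof -
    assume h: "Suc (Suc i) < n" "a < m" "p = (Inr {i, Suc i}, a)" "q = (Inr {Suc i, Suc (Suc i)}, a)"
    have 1: "{i, Suc i} \<in> edges (path_graph n)" "{Suc i, Suc (Suc i)} \<in> edges (path_graph n)"
      using h(1) by auto
    have 2: "{i, Suc i} \<noteq> {Suc i, Suc (Suc i)}" "{i, Suc i} \<inter> {Suc i, Suc (Suc i)} \<noteq> {}"
      by (auto simp: doubleton_eq_iff)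
    have "{Inr {i, Suc i}, Inr {Suc i, Suc (Suc i)}} \<in> edges (Q_graph (path_graph n))"
      unfolding eQ apply (rule UnI2) using 1 2 by blast
    note 3 = this
    have "{(Inr {i, Suc i}, a), (Inr {Suc i, Suc (Suc i)}, a)} \<in> {{(u, a), (v, a)} | u v a. a \<in> verts (path_graph m) \<and> {u, v} \<in> edges (Q_graph (path_graph n))}"
      apply (rule CollectI, rule exI[of _ "Inr {i, Suc i}"], rule exI[of _ "Inr {Suc i, Suc (Suc i)}"], rule exI[of _ a])
      using h(2) 3 by simp
    then show ?thesis unfolding eS h(3,4) by (rule UnI2)
  qed
  done

lemma edge_adj: "e \<in> edges (Q_sum (path_graph n) (path_graph m)) \<Longrightarrow> \<exists>p q. e = {p, q} \<and> (adj n m p q \<or> adj n m q p)"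
  unfolding eS
proof (elim UnE CollectE exE conjE)
  fix x a b
  assume h: "e = {(Inl x, a), (Inl x, b)}" "x \<in> verts (path_graph n)" "{a, b} \<in> edges (path_graph m)"
  then obtain j where j: "{a, b} = {j, Suc j}" "Suc j < m" by auto
  then have "(a = j \<and> b = Suc j) \<or> (a = Suc j \<and> b = j)" by (auto simp: doubleton_eq_iff)
  then have "e = {(Inl x, j), (Inl x, Suc j)}" using h(1) by auto
  moreover have "adj n m (Inl x, j) (Inl x, Suc j)" using h(2) j(2) unfolding adj_def by simp
  ultimately show ?thesis by blast
next
  fix u v a
  assume h: "e = {(u, a), (v, a)}" "a \<in> verts (path_graph m)" "{u, v} \<in> edges (Q_graph (path_graph n))"
  from h(3) show ?thesis unfolding eQ
  proof (elim UnE CollectE exE conjE)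
    fix x f
    assume h2: "{u, v} = {Inl x, Inr f}" "f \<in> edges (path_graph n)" "x \<in> f"
    then obtain j where j: "f = {j, Suc j}" "Suc j < n" by auto
    have "adj n m (Inl x, a) (Inr f, a) \<or> adj n m (Inr f, a) (Inl x, a)"
      using j h2(3) h(2) unfolding adj_def by auto
    moreover have "e = {(Inl x, a), (Inr f, a)}" using h(1) h2(1) by (auto simp: doubleton_eq_iff)
    ultimately show ?thesis by blast
  next
    fix f f'
    assume h2: "{u, v} = {Inr f, Inr f'}" "f \<in> edges (path_graph n)" "f' \<in> edges (path_graph n)" "f \<noteq> f'" "f \<inter> f' \<noteq> {}"
    then obtain j k where j: "f = {j, Suc j}" "Suc j < n" "f' = {k, Suc k}" "Suc k < n" by auto
    from h2(5) obtain z where z: "z \<in> f" "z \<in> f'" by blast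
    have "j = k \<or> k = Suc j \<or> j = Suc k" using j(1,3) z by auto
    moreover have "j \<noteq> k" using h2(4) j by auto
    ultimately have "k = Suc j \<or> j = Suc k" by blast
    then have "adj n m (Inr f, a) (Inr f', a) \<or> adj n m (Inr f', a) (Inr f, a)"
      using j h(2) unfolding adj_def by auto
    moreover have "e = {(Inr f, a), (Inr f', a)}" using h(1) h2(1) by (auto simp: doubleton_eq_iff)
    ultimately show ?thesis by blast
  qed
qed




lemma adjI1: "i < n \<Longrightarrow> Suc a < m \<Longrightarrow> adj n m (Inl i, a) (Inl i, Suc a)" unfolding adj_def by blast
lemma adjI2: "Suc i < n \<Longrightarrow> a < m \<Longrightarrow> adj n m (Inl i, a) (Inr {i, Suc i}, a)" unfolding adj_def by blast
lemma adjI3: "Suc i < n \<Longrightarrow> a < m \<Longrightarrow> adj n m (Inr {i, Suc i}, a) (Inl (Suc i), a)" unfolding adj_def by blast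
lemma adjI4: "Suc (Suc i) < n \<Longrightarrow> a < m \<Longrightarrow> adj n m (Inr {i, Suc i}, a) (Inr {Suc i, Suc (Suc i)}, a)" unfolding adj_def by blast

fun col :: "nat + nat set \<Rightarrow> nat" where
  "col (Inl i) = 2 * i"
| "col (Inr f) = 2 * Min f + 1"

definition rk :: "nat \<Rightarrow> (nat + nat set) \<times> nat \<Rightarrow> nat" where
  "rk m p = col (fst p) * m + snd p"

lemma adj_rank: "adj n m p q \<Longrightarrow> rk m p < rk m q"
  unfolding adj_def rk_def
proof (elim disjE exE conjE)
  fix i a assume "i < n" "Suc a < m" "p = (Inl i, a)" "q = (Inl i, Suc a)"
  then show "col (fst p) * m + snd p < col (fst q) * m + snd q" by simp
next
  fix i a assume h: "Suc i < n" "a < m" "p = (Inl i, a)" "q = (Inr {i, Suc i}, a)"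
  have "2 * i * m < (2 * i + 1) * m" using h(2) by simp
  then show "col (fst p) * m + snd p < col (fst q) * m + snd q" using h by simp
next
  fix i a assume h: "Suc i < n" "a < m" "p = (Inr {i, Suc i}, a)" "q = (Inl (Suc i), a)"
  have "(2 * i + 1) * m < (2 * Suc i) * m" using h(2) by simp
  then show "col (fst p) * m + snd p < col (fst q) * m + snd q" using h by simp
next
  fix i a assume h: "Suc (Suc i) < n" "a < m" "p = (Inr {i, Suc i}, a)" "q = (Inr {Suc i, Suc (Suc i)}, a)"
  have "(2 * i + 1) * m < (2 * Suc i + 1) * m" using h(2) by simp
  then show "col (fst p) * m + snd p < col (fst q) * m + snd q" using h by simp
qed

lemma adj_verts: "adj n m p q \<Longrightarrow> p \<in> verts (Q_sum (path_graph n) (path_graph m)) \<and> q \<in> verts (Q_sum (path_graph n) (path_graph m))"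
proof -
  have l: "(Inl i, a) \<in> verts (Q_sum (path_graph n) (path_graph m))" if "i < n" "a < m" for i a
    using that by simp
  have r: "(Inr {i, Suc i}, a) \<in> verts (Q_sum (path_graph n) (path_graph m))" if "Suc i < n" "a < m" for i a
  proof -
    have "{i, Suc i} \<in> edges (path_graph n)" using that(1) by auto
    then show ?thesis using that(2) by simp
  qed
  assume "adj n m p q"
  then show ?thesis unfolding adj_def
  proof (elim disjE exE conjE)
  qed (auto simp del: vS intro!: l r)
qed

lemma finite_verts: "finite (verts (Q_sum (path_graph n) (path_graph m)))"
proof -
  have "{{i, Suc i} | i. Suc i < n} = (\<lambda>i. {i, Suc i}) ` {i. Suc i < n}" by auto
  moreover have "finite {i::nat. Suc i < n}" by (rule finite_subset[of _ "{..<n}"]) auto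
  ultimately have "finite {{i, Suc i} | i. Suc i < n}" by simp
  then show ?thesis by simp
qed

lemma edges_sub: "e \<in> edges (Q_sum (path_graph n) (path_graph m)) \<Longrightarrow> e \<subseteq> verts (Q_sum (path_graph n) (path_graph m))"
  using edge_adj adj_verts by blast

definition DA :: "nat \<Rightarrow> nat \<Rightarrow> (((nat + nat set) \<times> nat) \<times> ((nat + nat set) \<times> nat)) set" where
  "DA n m = {(p, q). adj n m p q}"

lemma DA_orient: "is_orientation (Q_sum (path_graph n) (path_graph m)) (DA n m)"
  unfolding is_orientation_def
proof (intro conjI ballI)
  fix d assume "d \<in> DA n m"
  then obtain p q where d: "d = (p, q)" "adj n m p q" unfolding DA_def by auto
  then have "p \<noteq> q" using adj_rank by fastforce
  then show "case d of (x, y) \<Rightarrow> x \<noteq> y \<and> {x, y} \<in> edges (Q_sum (path_graph n) (path_graph m))"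
    using d adj_edge by auto
next
  fix e assume "e \<in> edges (Q_sum (path_graph n) (path_graph m))"
  then obtain p q where pq: "e = {p, q}" "adj n m p q \<or> adj n m q p" using edge_adj by blast
  then obtain x y where xy: "e = {x, y}" "adj n m x y" by blast
  show "\<exists>!a. a \<in> DA n m \<and> {fst a, snd a} = e"
  proof (rule ex1I[of _ "(x, y)"])
    show "(x, y) \<in> DA n m \<and> {fst (x, y), snd (x, y)} = e" using xy unfolding DA_def by simp
  next
    fix a assume a: "a \<in> DA n m \<and> {fst a, snd a} = e"
    then have "adj n m (fst a) (snd a)" unfolding DA_def by auto
    moreover have "a = (x, y) \<or> a = (y, x)" using a xy(1) by (cases a) (auto simp: doubleton_eq_iff)
    ultimately show "a = (x, y)"
    proof (elim disjE)
      assume "adj n m (fst a) (snd a)" "a = (y, x)"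
      then have "rk m y < rk m x" using adj_rank by simp
      with adj_rank[OF xy(2)] show ?thesis by simp
    qed
  qed
qed

lemma orient_finite:
  assumes "is_orientation G D" "finite (verts G)" "\<And>e. e \<in> edges G \<Longrightarrow> e \<subseteq> verts G"
  shows "finite D"
proof -
  have "D \<subseteq> verts G \<times> verts G"
  proof
    fix d assume "d \<in> D"
    then obtain x y where "d = (x, y)" "{x, y} \<in> edges G" using assms(1) unfolding is_orientation_def by fastforce
    then show "d \<in> verts G \<times> verts G" using assms(3) by blast
  qed
  then show ?thesis using assms(2) finite_subset by blast
qed

lemma acyc_AT:
  fixes r :: "'a \<Rightarrow> nat"
  assumes "is_orientation G D" "finite D" "\<And>x y. (x, y) \<in> D \<Longrightarrow> r x < r y"
    "\<And>e. e \<in> edges G \<Longrightarrow> e \<subseteq> verts G"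
  shows "AT_orientation G D"
proof -
  have key: "A = {}" if A: "A \<subseteq> D" "eulerian (verts G) A" for A
  proof (rule ccontr)
    assume ne: "A \<noteq> {}"
    have fA: "finite A" using A(1) assms(2) finite_subset by blast
    define M where "M = Max (r ` snd ` A)"
    have "M \<in> r ` snd ` A" unfolding M_def using fA ne by (intro Max_in) auto
    then obtain x v where xv: "(x, v) \<in> A" "r v = M" by auto
    have "{x, v} \<in> edges G" using xv(1) A(1) assms(1) unfolding is_orientation_def by fastforce
    then have vV: "v \<in> verts G" using assms(4) by blast
    have "{a \<in> A. snd a = v} \<noteq> {}" using xv(1) by force
    then have "indeg A v > 0" unfolding indeg_def using fA by (simp add: card_gt_0_iff)
    then have "outdeg A v > 0" using A(2) vV unfolding eulerian_def by simp
    then have "{a \<in> A. fst a = v} \<noteq> {}" unfolding outdeg_def by (metis card.empty less_irrefl)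
    then obtain w where w: "(v, w) \<in> A" by auto
    then have "r v < r w" using A(1) assms(3) by blast
    moreover have "r w \<le> M" unfolding M_def using fA w by (intro Max_ge) force+
    ultimately show False using xv(2) by simp
  qed
  have e: "{A. A \<subseteq> D \<and> eulerian (verts G) A \<and> even (card A)} = {{}}"
  proof (rule set_eqI)
    fix A
    show "A \<in> {A. A \<subseteq> D \<and> eulerian (verts G) A \<and> even (card A)} \<longleftrightarrow> A \<in> {{}}"
    proof
      assume "A \<in> {A. A \<subseteq> D \<and> eulerian (verts G) A \<and> even (card A)}"
      then show "A \<in> {{}}" using key by blast
    next
      assume "A \<in> {{}}"
      then show "A \<in> {A. A \<subseteq> D \<and> eulerian (verts G) A \<and> even (card A)}"
        by (simp add: eulerian_def indeg_def outdeg_def)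
    qed
  qed
  have o: "{A. A \<subseteq> D \<and> eulerian (verts G) A \<and> odd (card A)} = {}"
  proof -
    have False if "A \<subseteq> D" "eulerian (verts G) A" "odd (card A)" for A
    proof -
      have "A = {}" using key that(1,2) .
      then show False using that(3) by simp
    qed
    then show ?thesis by blast
  qed
  show ?thesis unfolding AT_orientation_def even_eulerian_def odd_eulerian_def e o using assms(1) by simp
qed

lemma outdeg_le2: "outdeg D v \<le> 2" if "{a \<in> D. fst a = v} \<subseteq> {(v, w1), (v, w2)}"
proof -
  have "card {a \<in> D. fst a = v} \<le> card {(v, w1), (v, w2)}" using that by (intro card_mono) auto
  also have "\<dots> \<le> 2" by (simp add: card_insert_if)
  finally show ?thesis unfolding outdeg_def .
qed

lemma Min_pair[simp]: "Min {i, Suc i} = (i::nat)" by simp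

lemma adj_out_Inl: "adj n m (Inl i, a) q \<Longrightarrow> q = (Inl i, Suc a) \<or> q = (Inr {i, Suc i}, a)"
  unfolding adj_def by auto

lemma adj_out_Inr: "adj n m (Inr f, a) q \<Longrightarrow> q = (Inl (Suc (Min f)), a) \<or> q = (Inr {Suc (Min f), Suc (Suc (Min f))}, a)"
  unfolding adj_def by auto

lemma DA_outdeg: "outdeg (DA n m) v \<le> 2"
proof (cases v)
  case (Pair u a)
  show ?thesis
  proof (cases u)
    case (Inl i)
    show ?thesis
      apply (rule outdeg_le2[of _ _ "(Inl i, Suc a)" "(Inr {i, Suc i}, a)"])
      using Pair Inl unfolding DA_def by (auto dest: adj_out_Inl)
  next
    case (Inr f)
    show ?thesis
      apply (rule outdeg_le2[of _ _ "(Inl (Suc (Min f)), a)" "(Inr {Suc (Min f), Suc (Suc (Min f))}, a)"])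
      using Pair Inr unfolding DA_def by (auto dest: adj_out_Inr)
  qed
qed




lemma pigeon:
  assumes "is_orientation G D" "finite D" "S \<subseteq> edges G" "finite W" "\<And>e. e \<in> S \<Longrightarrow> e \<subseteq> W" "card W < card S"
  shows "\<exists>v\<in>W. outdeg D v \<ge> 2"
proof -
  define arc where "arc e = (THE a. a \<in> D \<and> {fst a, snd a} = e)" for e
  have arc: "arc e \<in> D \<and> {fst (arc e), snd (arc e)} = e" if "e \<in> S" for e
  proof -
    have "e \<in> edges G" using assms(3) that by blast
    then have "\<exists>!a. a \<in> D \<and> {fst a, snd a} = e" using assms(1) unfolding is_orientation_def by simp
    then show ?thesis unfolding arc_def by (rule theI')
  qed
  define f where "f e = fst (arc e)" for e
  have fW: "f ` S \<subseteq> W"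
  proof
    fix v assume "v \<in> f ` S"
    then obtain e where e: "e \<in> S" "v = fst (arc e)" unfolding f_def by blast
    then have "v \<in> e" using conjunct2[OF arc[OF e(1)]] by blast
    then show "v \<in> W" using assms(5)[OF e(1)] by blast
  qed
  have "\<not> inj_on f S"
  proof
    assume "inj_on f S"
    then have "card S \<le> card W" using card_inj_on_le[OF _ fW assms(4)] by blast
    then show False using assms(6) by simp
  qed
  then obtain e1 e2 where e: "e1 \<in> S" "e2 \<in> S" "e1 \<noteq> e2" "f e1 = f e2" unfolding inj_on_def by blast
  have ne: "arc e1 \<noteq> arc e2"
  proof
    assume "arc e1 = arc e2"
    then have "e1 = e2" using conjunct2[OF arc[OF e(1)]] conjunct2[OF arc[OF e(2)]] by metis
    then show False using e(3) by simp
  qed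
  have sub: "{arc e1, arc e2} \<subseteq> {a \<in> D. fst a = f e1}"
    using conjunct1[OF arc[OF e(1)]] conjunct1[OF arc[OF e(2)]] e(4) unfolding f_def by simp
  have "2 = card {arc e1, arc e2}" using ne by simp
  also have "\<dots> \<le> card {a \<in> D. fst a = f e1}" using sub assms(2) by (intro card_mono) auto
  finally have "outdeg D (f e1) \<ge> 2" unfolding outdeg_def .
  moreover have "f e1 \<in> W" using fW e(1) by blast
  ultimately show ?thesis by blast
qed

lemma outdeg_pos: "finite D \<Longrightarrow> d \<in> D \<Longrightarrow> outdeg D (fst d) \<ge> 1"
proof -
  assume "finite D" "d \<in> D"
  then have "finite {a \<in> D. fst a = fst d}" "d \<in> {a \<in> D. fst a = fst d}" by auto
  then have "card {a \<in> D. fst a = fst d} > 0" using card_gt_0_iff by blast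
  then show ?thesis unfolding outdeg_def by simp
qed

lemma orientQ_finite: "is_orientation (Q_sum (path_graph n) (path_graph m)) D \<Longrightarrow> finite D"
  using orient_finite finite_verts edges_sub by blast

lemma propag:
  assumes "A \<subseteq> D" "finite D" "eulerian V A" "v \<in> V" "(u, v) \<in> A" "\<And>w'. (v, w') \<in> D \<Longrightarrow> w' = w"
  shows "(v, w) \<in> A"
proof -
  have fA: "finite A" using assms(1,2) finite_subset by blast
  have "{a \<in> A. snd a = v} \<noteq> {}" using assms(5) by force
  then have "indeg A v > 0" unfolding indeg_def using fA by (simp add: card_gt_0_iff)
  then have "outdeg A v > 0" using assms(3,4) unfolding eulerian_def by simp
  then have "{a \<in> A. fst a = v} \<noteq> {}" unfolding outdeg_def by (metis card.empty less_irrefl)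
  then obtain w' where "(v, w') \<in> A" by auto
  moreover then have "w' = w" using assms(1,6) by blast
  ultimately show ?thesis by simp
qed

lemma ex1_arc: "(x, y) \<in> D \<Longrightarrow> (y, x) \<notin> D \<Longrightarrow> \<exists>!a. a \<in> D \<and> {fst a, snd a} = {x, y}"
proof -
  assume h: "(x, y) \<in> D" "(y, x) \<notin> D"
  show ?thesis
  proof (rule ex1I[of _ "(x, y)"])
    show "(x, y) \<in> D \<and> {fst (x, y), snd (x, y)} = {x, y}" using h by simp
  next
    fix a assume a: "a \<in> D \<and> {fst a, snd a} = {x, y}"
    obtain p q where pq: "a = (p, q)" by (cases a)
    then have "(p = x \<and> q = y) \<or> (p = y \<and> q = x)" using a by (simp add: doubleton_eq_iff)
    then show "a = (x, y)" using a h(2) pq by auto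
  qed
qed

lemma deg_eq: "{a\<in>D. snd a = v} = {(u, v)} \<Longrightarrow> {a\<in>D. fst a = v} = {(v, w)} \<Longrightarrow> indeg D v = outdeg D v \<and> outdeg D v = 1"
  unfolding indeg_def outdeg_def by simp




lemma upper3: "\<exists>D. AT_orientation (Q_sum (path_graph n) (path_graph m)) D \<and>
   (\<forall>v\<in>verts (Q_sum (path_graph n) (path_graph m)). outdeg D v + 1 \<le> 3)"
proof (intro exI conjI ballI)
  show "AT_orientation (Q_sum (path_graph n) (path_graph m)) (DA n m)"
  proof (rule acyc_AT[of _ _ "rk m"])
    show "is_orientation (Q_sum (path_graph n) (path_graph m)) (DA n m)" by (rule DA_orient)
    then show "finite (DA n m)" by (rule orientQ_finite)
    show "rk m x < rk m y" if "(x, y) \<in> DA n m" for x y using that adj_rank unfolding DA_def by simp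
    show "e \<subseteq> verts (Q_sum (path_graph n) (path_graph m))" if "e \<in> edges (Q_sum (path_graph n) (path_graph m))" for e
      using that by (rule edges_sub)
  qed
  fix v show "outdeg (DA n m) v + 1 \<le> 3" using DA_outdeg[of n m v] by simp
qed

lemma lower_n3:
  assumes "n \<ge> 3" "m \<ge> 2" "is_orientation (Q_sum (path_graph n) (path_graph m)) D"
  shows "\<exists>v\<in>verts (Q_sum (path_graph n) (path_graph m)). outdeg D v \<ge> 2"
proof -
  have n: "Suc 0 < n" "Suc (Suc 0) < n" and m: "0 < m" "Suc 0 < m" using assms(1,2) by auto
  have f1: "adj n m (Inr {0, Suc 0}, a) (Inl (Suc 0), a)" if "a < m" for a by (rule adjI3) (use n that in auto)
  have f2: "adj n m (Inl (Suc 0), a) (Inr {Suc 0, Suc (Suc 0)}, a)" if "a < m" for a by (rule adjI2) (use n that in auto)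
  have f3: "adj n m (Inr {0, Suc 0}, a) (Inr {Suc 0, Suc (Suc 0)}, a)" if "a < m" for a by (rule adjI4) (use n that in auto)
  have f4: "adj n m (Inl (Suc 0), 0) (Inl (Suc 0), Suc 0)" by (rule adjI1) (use n m in auto)
  define S where "S = {{(Inr {0, Suc 0}, 0), (Inl (Suc 0), 0)}, {(Inl (Suc 0), 0), (Inr {Suc 0, Suc (Suc 0)}, 0)},
     {(Inr {0, Suc 0}, 0), (Inr {Suc 0, Suc (Suc 0)}, 0)},
     {(Inr {0, Suc 0}, Suc 0), (Inl (Suc 0), Suc 0)}, {(Inl (Suc 0), Suc 0), (Inr {Suc 0, Suc (Suc 0)}, Suc 0)},
     {(Inr {0, Suc 0}, Suc 0), (Inr {Suc 0, Suc (Suc 0)}, Suc 0)}, {(Inl (Suc 0), 0), (Inl (Suc 0), Suc 0)}}"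
  define W where "W = {(Inl (Suc 0), 0), (Inr {0, Suc 0}, 0), (Inr {Suc 0, Suc (Suc 0)}, 0),
     (Inl (Suc 0), Suc 0), (Inr {0, Suc 0}, Suc 0), (Inr {Suc 0, Suc (Suc 0)}, Suc 0)}"
  have SE: "S \<subseteq> edges (Q_sum (path_graph n) (path_graph m))"
    unfolding S_def using adj_edge[OF f1] adj_edge[OF f2] adj_edge[OF f3] adj_edge[OF f4] m by simp
  have WV: "W \<subseteq> verts (Q_sum (path_graph n) (path_graph m))"
    unfolding W_def using adj_verts[OF f1] adj_verts[OF f2] m by simp
  have cS: "card S = 7" unfolding S_def by (simp add: doubleton_eq_iff)
  have cW: "card W = 6" unfolding W_def by (simp add: doubleton_eq_iff)
  have "\<exists>v\<in>W. outdeg D v \<ge> 2"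
  proof (rule pigeon[OF assms(3) orientQ_finite[OF assms(3)] SE])
    show "finite W" unfolding W_def by simp
    show "e \<subseteq> W" if "e \<in> S" for e using that unfolding S_def W_def by auto
    show "card W < card S" using cS cW by simp
  qed
  then show ?thesis using WV by blast
qed


lemma lower_m3:
  assumes "n \<ge> 2" "m \<ge> 3" "is_orientation (Q_sum (path_graph n) (path_graph m)) D"
  shows "\<exists>v\<in>verts (Q_sum (path_graph n) (path_graph m)). outdeg D v \<ge> 2"
proof -
  have n: "0 < n" "Suc 0 < n" and m: "0 < m" "Suc 0 < m" "Suc (Suc 0) < m" using assms(1,2) by auto
  have f1: "adj n m (Inl 0, a) (Inr {0, Suc 0}, a)" if "a < m" for a by (rule adjI2) (use n that in auto)
  have f2: "adj n m (Inr {0, Suc 0}, a) (Inl (Suc 0), a)" if "a < m" for a by (rule adjI3) (use n that in auto)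
  have f3: "adj n m (Inl i, a) (Inl i, Suc a)" if "i < n" "Suc a < m" for i a by (rule adjI1) (use that in auto)
  define S where "S = {{(Inl 0, 0), (Inr {0, Suc 0}, 0)}, {(Inl 0, Suc 0), (Inr {0, Suc 0}, Suc 0)},
     {(Inl 0, Suc (Suc 0)), (Inr {0, Suc 0}, Suc (Suc 0))},
     {(Inr {0, Suc 0}, 0), (Inl (Suc 0), 0)}, {(Inr {0, Suc 0}, Suc 0), (Inl (Suc 0), Suc 0)},
     {(Inr {0, Suc 0}, Suc (Suc 0)), (Inl (Suc 0), Suc (Suc 0))},
     {(Inl 0, 0), (Inl 0, Suc 0)}, {(Inl 0, Suc 0), (Inl 0, Suc (Suc 0))},
     {(Inl (Suc 0), 0), (Inl (Suc 0), Suc 0)}, {(Inl (Suc 0), Suc 0), (Inl (Suc 0), Suc (Suc 0))}}"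
  define W where "W = {(Inl 0, 0), (Inl (Suc 0), 0), (Inr {0, Suc 0}, 0),
     (Inl 0, Suc 0), (Inl (Suc 0), Suc 0), (Inr {0, Suc 0}, Suc 0),
     (Inl 0, Suc (Suc 0)), (Inl (Suc 0), Suc (Suc 0)), (Inr {0, Suc 0}, Suc (Suc 0))}"
  have SE: "S \<subseteq> edges (Q_sum (path_graph n) (path_graph m))"
    unfolding S_def using adj_edge[OF f1] adj_edge[OF f2] adj_edge[OF f3] m n by simp
  have WV: "W \<subseteq> verts (Q_sum (path_graph n) (path_graph m))"
    unfolding W_def using adj_verts[OF f1] adj_verts[OF f2] m by simp
  have cS: "card S = 10" unfolding S_def by (simp add: doubleton_eq_iff)
  have cW: "card W = 9" unfolding W_def by (simp add: doubleton_eq_iff)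
  have "\<exists>v\<in>W. outdeg D v \<ge> 2"
  proof (rule pigeon[OF assms(3) orientQ_finite[OF assms(3)] SE])
    show "finite W" unfolding W_def by simp
    show "e \<subseteq> W" if "e \<in> S" for e using that unfolding S_def W_def by auto
    show "card W < card S" using cS cW by simp
  qed
  then show ?thesis using WV by blast
qed




definition D6 :: "(((nat + nat set) \<times> nat) \<times> ((nat + nat set) \<times> nat)) set" where
  "D6 = {((Inl 0, 0), (Inr {0, Suc 0}, 0)), ((Inr {0, Suc 0}, 0), (Inl (Suc 0), 0)),
         ((Inl (Suc 0), 0), (Inl (Suc 0), Suc 0)), ((Inl (Suc 0), Suc 0), (Inr {0, Suc 0}, Suc 0)),
         ((Inr {0, Suc 0}, Suc 0), (Inl 0, Suc 0)), ((Inl 0, Suc 0), (Inl 0, 0))}"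

lemma verts22: "v \<in> verts (Q_sum (path_graph 2) (path_graph 2)) \<Longrightarrow>
  v \<in> {(Inl 0, 0), (Inr {0, Suc 0}, 0), (Inl (Suc 0), 0), (Inl (Suc 0), Suc 0), (Inr {0, Suc 0}, Suc 0), (Inl 0, Suc 0)}"
proof -
  have e: "{{i, Suc i} |i. Suc i < 2} = {{0, Suc 0}}" by auto
  assume "v \<in> verts (Q_sum (path_graph 2) (path_graph 2))"
  then show ?thesis unfolding vS vQ vp ep e by (auto simp: numeral_2_eq_2 less_Suc_eq)
qed

lemma adj22: "adj 2 2 p q \<Longrightarrow> (p, q) \<in> D6 \<or> (q, p) \<in> D6"
  unfolding adj_def D6_def by (auto simp: numeral_2_eq_2 less_Suc_eq)

lemma D6_adj: "(p, q) \<in> D6 \<Longrightarrow> adj 2 2 p q \<or> adj 2 2 q p"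
  unfolding D6_def
  using adjI1[of 0 2 0 2] adjI1[of "Suc 0" 2 0 2] adjI2[of 0 2 0 2] adjI2[of 0 2 "Suc 0" 2]
    adjI3[of 0 2 0 2] adjI3[of 0 2 "Suc 0" 2] by auto

lemma D6_asym: "(p, q) \<in> D6 \<Longrightarrow> (q, p) \<notin> D6"
  unfolding D6_def by auto

lemma D6_orient: "is_orientation (Q_sum (path_graph 2) (path_graph 2)) D6"
  unfolding is_orientation_def
proof (intro conjI ballI)
  fix d assume d: "d \<in> D6"
  obtain p q where pq: "d = (p, q)" by (cases d)
  have "adj 2 2 p q \<or> adj 2 2 q p" using D6_adj d pq by simp
  then have "{p, q} \<in> edges (Q_sum (path_graph 2) (path_graph 2))"
  proof
    assume "adj 2 2 p q" then show ?thesis by (rule adj_edge)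
  next
    assume "adj 2 2 q p" then have "{q, p} \<in> edges (Q_sum (path_graph 2) (path_graph 2))" by (rule adj_edge)
    then show ?thesis by (simp add: insert_commute)
  qed
  moreover have "p \<noteq> q" using d pq unfolding D6_def by auto
  ultimately show "case d of (x, y) \<Rightarrow> x \<noteq> y \<and> {x, y} \<in> edges (Q_sum (path_graph 2) (path_graph 2))"
    using pq by simp
next
  fix e assume "e \<in> edges (Q_sum (path_graph 2) (path_graph 2))"
  then obtain p q where pq: "e = {p, q}" "adj 2 2 p q \<or> adj 2 2 q p" using edge_adj by blast
  then have "(p, q) \<in> D6 \<or> (q, p) \<in> D6" using adj22 by blast
  then show "\<exists>!a. a \<in> D6 \<and> {fst a, snd a} = e"
  proof
    assume h: "(p, q) \<in> D6"
    have "\<exists>!a. a \<in> D6 \<and> {fst a, snd a} = {p, q}" by (rule ex1_arc[OF h D6_asym[OF h]])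
    then show ?thesis using pq(1) by simp
  next
    assume h: "(q, p) \<in> D6"
    have "\<exists>!a. a \<in> D6 \<and> {fst a, snd a} = {q, p}" by (rule ex1_arc[OF h D6_asym[OF h]])
    then show ?thesis using pq(1) by (simp add: insert_commute)
  qed
qed


lemma D6_head: "(p, q) \<in> D6 \<Longrightarrow> q \<in> verts (Q_sum (path_graph 2) (path_graph 2))"
  using D6_adj adj_verts by blast

lemma D6_fin: "finite D6" unfolding D6_def by simp

lemma D6_deg: "v \<in> verts (Q_sum (path_graph 2) (path_graph 2)) \<Longrightarrow> indeg D6 v = outdeg D6 v \<and> outdeg D6 v = 1"
proof -
  assume "v \<in> verts (Q_sum (path_graph 2) (path_graph 2))"
  then have "v \<in> {(Inl 0, 0), (Inr {0, Suc 0}, 0), (Inl (Suc 0), 0), (Inl (Suc 0), Suc 0), (Inr {0, Suc 0}, Suc 0), (Inl 0, Suc 0)}" by (rule verts22)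
  then consider "v = (Inl 0, 0)" | "v = (Inr {0, Suc 0}, 0)" | "v = (Inl (Suc 0), 0)" | "v = (Inl (Suc 0), Suc 0)" | "v = (Inr {0, Suc 0}, Suc 0)" | "v = (Inl 0, Suc 0)" by blast
  then show ?thesis
  proof cases
    assume "v = (Inl 0, 0)" then show ?thesis by (intro deg_eq[of _ _ "(Inl 0, Suc 0)" "(Inr {0, Suc 0}, 0)"]) (auto simp: D6_def)
  next
    assume "v = (Inr {0, Suc 0}, 0)" then show ?thesis by (intro deg_eq[of _ _ "(Inl 0, 0)" "(Inl (Suc 0), 0)"]) (auto simp: D6_def)
  next
    assume "v = (Inl (Suc 0), 0)" then show ?thesis by (intro deg_eq[of _ _ "(Inr {0, Suc 0}, 0)" "(Inl (Suc 0), Suc 0)"]) (auto simp: D6_def)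
  next
    assume "v = (Inl (Suc 0), Suc 0)" then show ?thesis by (intro deg_eq[of _ _ "(Inl (Suc 0), 0)" "(Inr {0, Suc 0}, Suc 0)"]) (auto simp: D6_def)
  next
    assume "v = (Inr {0, Suc 0}, Suc 0)" then show ?thesis by (intro deg_eq[of _ _ "(Inl (Suc 0), Suc 0)" "(Inl 0, Suc 0)"]) (auto simp: D6_def)
  next
    assume "v = (Inl 0, Suc 0)" then show ?thesis by (intro deg_eq[of _ _ "(Inr {0, Suc 0}, Suc 0)" "(Inl 0, 0)"]) (auto simp: D6_def)
  qed
qed

lemma D6_eul: assumes A: "A \<subseteq> D6" and eul: "eulerian (verts (Q_sum (path_graph 2) (path_graph 2))) A" and ne: "A \<noteq> {}"
  shows "A = D6"
proof -
  have s0: "((Inr {0, Suc 0}, 0), (Inl (Suc 0), 0)) \<in> A" if "((Inl 0, 0), (Inr {0, Suc 0}, 0)) \<in> A"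
    by (rule propag[OF A D6_fin eul D6_head[of "(Inl 0, 0)"] that]) (auto simp: D6_def)
  have s1: "((Inl (Suc 0), 0), (Inl (Suc 0), Suc 0)) \<in> A" if "((Inr {0, Suc 0}, 0), (Inl (Suc 0), 0)) \<in> A"
    by (rule propag[OF A D6_fin eul D6_head[of "(Inr {0, Suc 0}, 0)"] that]) (auto simp: D6_def)
  have s2: "((Inl (Suc 0), Suc 0), (Inr {0, Suc 0}, Suc 0)) \<in> A" if "((Inl (Suc 0), 0), (Inl (Suc 0), Suc 0)) \<in> A"
    by (rule propag[OF A D6_fin eul D6_head[of "(Inl (Suc 0), 0)"] that]) (auto simp: D6_def)
  have s3: "((Inr {0, Suc 0}, Suc 0), (Inl 0, Suc 0)) \<in> A" if "((Inl (Suc 0), Suc 0), (Inr {0, Suc 0}, Suc 0)) \<in> A"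
    by (rule propag[OF A D6_fin eul D6_head[of "(Inl (Suc 0), Suc 0)"] that]) (auto simp: D6_def)
  have s4: "((Inl 0, Suc 0), (Inl 0, 0)) \<in> A" if "((Inr {0, Suc 0}, Suc 0), (Inl 0, Suc 0)) \<in> A"
    by (rule propag[OF A D6_fin eul D6_head[of "(Inr {0, Suc 0}, Suc 0)"] that]) (auto simp: D6_def)
  have s5: "((Inl 0, 0), (Inr {0, Suc 0}, 0)) \<in> A" if "((Inl 0, Suc 0), (Inl 0, 0)) \<in> A"
    by (rule propag[OF A D6_fin eul D6_head[of "(Inl 0, Suc 0)"] that]) (auto simp: D6_def)
  from ne A obtain c where c: "c \<in> A" "c \<in> D6" by blast
  then have "((Inl 0, 0), (Inr {0, Suc 0}, 0)) \<in> A \<or> ((Inr {0, Suc 0}, 0), (Inl (Suc 0), 0)) \<in> A \<or> ((Inl (Suc 0), 0), (Inl (Suc 0), Suc 0)) \<in> A \<or> ((Inl (Suc 0), Suc 0), (Inr {0, Suc 0}, Suc 0)) \<in> A \<or> ((Inr {0, Suc 0}, Suc 0), (Inl 0, Suc 0)) \<in> A \<or> ((Inl 0, Suc 0), (Inl 0, 0)) \<in> A" unfolding D6_def by blast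
  then have "((Inl 0, 0), (Inr {0, Suc 0}, 0)) \<in> A \<and> ((Inr {0, Suc 0}, 0), (Inl (Suc 0), 0)) \<in> A \<and> ((Inl (Suc 0), 0), (Inl (Suc 0), Suc 0)) \<in> A \<and> ((Inl (Suc 0), Suc 0), (Inr {0, Suc 0}, Suc 0)) \<in> A \<and> ((Inr {0, Suc 0}, Suc 0), (Inl 0, Suc 0)) \<in> A \<and> ((Inl 0, Suc 0), (Inl 0, 0)) \<in> A" using s0 s1 s2 s3 s4 s5 by blast
  then have "D6 \<subseteq> A" unfolding D6_def by simp
  with A show ?thesis by blast
qed

lemma D6_AT: "AT_orientation (Q_sum (path_graph 2) (path_graph 2)) D6"
proof -
  have cD: "card D6 = 6" unfolding D6_def by simp
  have eD: "eulerian (verts (Q_sum (path_graph 2) (path_graph 2))) D6" unfolding eulerian_def using D6_deg by blast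
  have e: "{A. A \<subseteq> D6 \<and> eulerian (verts (Q_sum (path_graph 2) (path_graph 2))) A \<and> even (card A)} = {{}, D6}"
  proof (rule set_eqI)
    fix A
    show "A \<in> {A. A \<subseteq> D6 \<and> eulerian (verts (Q_sum (path_graph 2) (path_graph 2))) A \<and> even (card A)} \<longleftrightarrow> A \<in> {{}, D6}"
    proof
      assume "A \<in> {A. A \<subseteq> D6 \<and> eulerian (verts (Q_sum (path_graph 2) (path_graph 2))) A \<and> even (card A)}"
      then show "A \<in> {{}, D6}" using D6_eul by blast
    next
      assume "A \<in> {{}, D6}"
      then show "A \<in> {A. A \<subseteq> D6 \<and> eulerian (verts (Q_sum (path_graph 2) (path_graph 2))) A \<and> even (card A)}"
        using eD cD by (auto simp: eulerian_def indeg_def outdeg_def)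
    qed
  qed
  have o: "{A. A \<subseteq> D6 \<and> eulerian (verts (Q_sum (path_graph 2) (path_graph 2))) A \<and> odd (card A)} = {}"
  proof -
    have False if "A \<subseteq> D6" "eulerian (verts (Q_sum (path_graph 2) (path_graph 2))) A" "odd (card A)" for A
    proof (cases "A = {}")
      case True then show False using that(3) by simp
    next
      case False then have "A = D6" using D6_eul that(1,2) by blast
      then show False using that(3) cD by simp
    qed
    then show ?thesis by blast
  qed
  have ne: "D6 \<noteq> {}" using cD by auto
  show ?thesis unfolding AT_orientation_def even_eulerian_def odd_eulerian_def e o
    using D6_orient ne by simp
qed




lemma low2:
  assumes "n \<ge> 2" "m \<ge> 2" "AT_orientation (Q_sum (path_graph n) (path_graph m)) D"
    "\<forall>v\<in>verts (Q_sum (path_graph n) (path_graph m)). outdeg D v + 1 \<le> k"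
  shows "2 \<le> k"
proof -
  have o: "is_orientation (Q_sum (path_graph n) (path_graph m)) D" using assms(3) unfolding AT_orientation_def by blast
  have "adj n m (Inl 0, 0) (Inl 0, Suc 0)" by (rule adjI1) (use assms(1,2) in auto)
  then have e0: "{(Inl 0, 0), (Inl 0, Suc 0)} \<in> edges (Q_sum (path_graph n) (path_graph m))" by (rule adj_edge)
  have "\<forall>e\<in>edges (Q_sum (path_graph n) (path_graph m)). \<exists>!a. a \<in> D \<and> {fst a, snd a} = e"
    using o unfolding is_orientation_def by (rule conjunct2)
  then have "\<exists>!a. a \<in> D \<and> {fst a, snd a} = {(Inl 0, 0), (Inl 0, Suc 0)}" using e0 by (rule bspec)
  then obtain d where d: "d \<in> D" "{fst d, snd d} = {(Inl 0, 0), (Inl 0, Suc 0)}"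
    by (metis ex1_implies_ex)
  have "fst d \<in> verts (Q_sum (path_graph n) (path_graph m))" using edges_sub[OF e0] d(2) by blast
  moreover have "outdeg D (fst d) \<ge> 1" using outdeg_pos[OF orientQ_finite[OF o] d(1)] .
  ultimately show ?thesis using assms(4) by fastforce
qed

theorem corollary3p9:
  fixes n m :: nat
  assumes "n \<ge> 2" and "m \<ge> 2"
  shows "AT (Q_sum (path_graph n) (path_graph m)) = (if n = 2 \<and> m = 2 then 2 else 3)"
proof (cases "n = 2 \<and> m = 2")
  case True
  then have nm: "n = 2" "m = 2" by simp_all
  have "AT (Q_sum (path_graph 2) (path_graph 2)) = 2"
    unfolding AT_def
  proof (rule Least_equality)
    show "\<exists>D. AT_orientation (Q_sum (path_graph 2) (path_graph 2)) D \<and>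
      (\<forall>v\<in>verts (Q_sum (path_graph 2) (path_graph 2)). outdeg D v + 1 \<le> 2)"
    proof (intro exI[of _ D6] conjI ballI)
      show "AT_orientation (Q_sum (path_graph 2) (path_graph 2)) D6" by (rule D6_AT)
      fix v assume "v \<in> verts (Q_sum (path_graph 2) (path_graph 2))"
      then have "outdeg D6 v = 1" using D6_deg by blast
      then show "outdeg D6 v + 1 \<le> 2" by simp
    qed
  next
    fix k assume "\<exists>D. AT_orientation (Q_sum (path_graph 2) (path_graph 2)) D \<and>
      (\<forall>v\<in>verts (Q_sum (path_graph 2) (path_graph 2)). outdeg D v + 1 \<le> k)"
    then obtain D where D: "AT_orientation (Q_sum (path_graph 2) (path_graph 2)) D"
      "\<forall>v\<in>verts (Q_sum (path_graph 2) (path_graph 2)). outdeg D v + 1 \<le> k" by blast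
    show "2 \<le> k" by (rule low2[OF _ _ D]) simp_all
  qed
  then show ?thesis using nm by simp
next
  case False
  have "AT (Q_sum (path_graph n) (path_graph m)) = 3"
    unfolding AT_def
  proof (rule Least_equality)
    show "\<exists>D. AT_orientation (Q_sum (path_graph n) (path_graph m)) D \<and>
      (\<forall>v\<in>verts (Q_sum (path_graph n) (path_graph m)). outdeg D v + 1 \<le> 3)"
      by (rule upper3)
  next
    fix k assume "\<exists>D. AT_orientation (Q_sum (path_graph n) (path_graph m)) D \<and>
      (\<forall>v\<in>verts (Q_sum (path_graph n) (path_graph m)). outdeg D v + 1 \<le> k)"
    then obtain D where D: "AT_orientation (Q_sum (path_graph n) (path_graph m)) D"
      "\<forall>v\<in>verts (Q_sum (path_graph n) (path_graph m)). outdeg D v + 1 \<le> k" by blast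
    have o: "is_orientation (Q_sum (path_graph n) (path_graph m)) D" using D(1) unfolding AT_orientation_def by blast
    have "n \<ge> 3 \<or> m \<ge> 3" using False assms by auto
    then obtain v where "v \<in> verts (Q_sum (path_graph n) (path_graph m))" "outdeg D v \<ge> 2"
      using lower_n3[OF _ assms(2) o] lower_m3[OF assms(1) _ o] by blast
    then show "3 \<le> k" using D(2) by fastforce
  qed
  then show ?thesis using False by simp
qed


end
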